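(* Let $A=(A_1,\dots,A_d)$ take values in $\{0,1\}^d$ with probabilities $p(a)>0$ for all $a$. For each nonempty $b\subseteq V=\{1,\dots,d\}$ let $p_b$ be the marginal distribution of $(A_v)_{v\in b}$ and define the multivariate logistic parameter $$\eta_b = 2^{-|b|}\sum_{a_b\in\{0,1\}^{|b|}} (-1)^{\sum_{v\in b}a_v}\log p_b(a_b),$$ i.e. the highest-order log-linear interaction (in effect coding) of the marginal distribution of $(A_v)_{v\in b}$. Then $p$ is palindromic, i.e. $p(a)=p(\sim a)$ for all $a$, if and only if $\eta_b=0$ for all $b\subseteq V$ with $|b|$ odd.
   Context: $\sim a$ denotes the complement of the binary vector $a$, i.e. $(\sim a)_v=1-a_v$. $|b|$ denotes the cardinality of the subset $b$. *)

theory Defs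
  imports "HOL-Library.FuncSet" Complex_Main
begin

definition binvecs :: "nat set \<Rightarrow> (nat \<Rightarrow> nat) set" where
  "binvecs I = I \<rightarrow>\<^sub>E {0, 1}"

definition bcompl :: "nat set \<Rightarrow> (nat \<Rightarrow> nat) \<Rightarrow> (nat \<Rightarrow> nat)" where
  "bcompl V a = restrict (\<lambda>v. 1 - a v) V"

definition marginal :: "nat set \<Rightarrow> ((nat \<Rightarrow> nat) \<Rightarrow> real) \<Rightarrow> nat set \<Rightarrow> (nat \<Rightarrow> nat) \<Rightarrow> real" where
  "marginal V p b c = (\<Sum>a\<in>{a \<in> binvecs V. restrict a b = c}. p a)"

definition eta :: "nat set \<Rightarrow> ((nat \<Rightarrow> nat) \<Rightarrow> real) \<Rightarrow> nat set \<Rightarrow> real" where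
  "eta V p b = (1 / 2 ^ card b) *
     (\<Sum>c\<in>binvecs b. (-1) ^ (\<Sum>v\<in>b. c v) * ln (marginal V p b c))"

definition palindromic :: "nat set \<Rightarrow> ((nat \<Rightarrow> nat) \<Rightarrow> real) \<Rightarrow> bool" where
  "palindromic V p \<longleftrightarrow> (\<forall>a\<in>binvecs V. p a = p (bcompl V a))"

end

theory Submission
  imports Defs
begin

lemma binvecs_finite: "finite I \<Longrightarrow> finite (binvecs I)"
  by (simp add: binvecs_def finite_PiE)

lemma binvecs_val: "c \<in> binvecs I \<Longrightarrow> v \<in> I \<Longrightarrow> c v = 0 \<or> c v = 1"
  by (auto simp: binvecs_def)

lemma binvecs_out: "c \<in> binvecs I \<Longrightarrow> v \<notin> I \<Longrightarrow> c v = undefined"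
  by (auto simp: binvecs_def PiE_def extensional_def)

lemma binvecs_ext: "c \<in> binvecs I \<Longrightarrow> c \<in> extensional I"
  by (auto simp: binvecs_def PiE_def)

lemma bcompl_in: "c \<in> binvecs I \<Longrightarrow> bcompl I c \<in> binvecs I"
  by (auto simp: binvecs_def bcompl_def)

lemma bcompl_invol: "c \<in> binvecs I \<Longrightarrow> bcompl I (bcompl I c) = c"
proof (rule ext)
  fix v assume c: "c \<in> binvecs I"
  show "bcompl I (bcompl I c) v = c v"
    using binvecs_val[OF c, of v] binvecs_out[OF c, of v] by (auto simp: bcompl_def)
qed

lemma sum_compl: assumes "c \<in> binvecs I"
  shows "(\<Sum>v\<in>I. bcompl I c v) + (\<Sum>v\<in>I. c v) = card I"
proof -
  have "(\<Sum>v\<in>I. bcompl I c v) + (\<Sum>v\<in>I. c v) = (\<Sum>v\<in>I. bcompl I c v + c v)"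
    by (simp add: sum.distrib)
  also have "\<dots> = (\<Sum>v\<in>I. 1)"
  proof (rule sum.cong)
    fix v assume "v \<in> I"
    then show "bcompl I c v + c v = 1"
      using binvecs_val[OF assms, of v] by (auto simp: bcompl_def)
  qed simp
  finally show ?thesis by simp
qed

lemma sign_flip: assumes "x + y = (n::nat)" shows "(-1::real) ^ x = (-1) ^ n * (-1) ^ y"
proof -
  have "(-1::real) ^ n * (-1) ^ y = (-1) ^ x * ((-1) ^ y * (-1) ^ y)"
    by (simp add: assms[symmetric] power_add)
  also have "(-1::real) ^ y * (-1) ^ y = 1" by (simp flip: power_add add: mult_2[symmetric])
  finally show ?thesis by simp
qed

lemma flip_sum: assumes "finite I"
  shows "(\<Sum>c\<in>binvecs I. (-1::real)^(\<Sum>v\<in>I. c v) * f (bcompl I c))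
       = (-1)^card I * (\<Sum>c\<in>binvecs I. (-1)^(\<Sum>v\<in>I. c v) * f c)"
proof -
  have "(\<Sum>c\<in>binvecs I. (-1::real)^(\<Sum>v\<in>I. c v) * f (bcompl I c))
      = (\<Sum>c\<in>binvecs I. (-1::real)^(\<Sum>v\<in>I. bcompl I c v) * f c)"
    by (rule sum.reindex_bij_witness[of _ "bcompl I" "bcompl I"])
       (auto simp: bcompl_invol bcompl_in)
  also have "\<dots> = (\<Sum>c\<in>binvecs I. (-1)^card I * ((-1)^(\<Sum>v\<in>I. c v) * f c))"
    by (rule sum.cong) (use sign_flip[OF sum_compl] in auto)
  finally show ?thesis by (simp add: sum_distrib_left)
qed

lemma ln_term_nonneg: "(x::real) > 0 \<Longrightarrow> y > 0 \<Longrightarrow> 0 \<le> (x - y) * (ln x - ln y)"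
  by (cases "x \<le> y") (auto intro: mult_nonpos_nonpos mult_nonneg_nonneg)

lemma ln_term_zero: "(x::real) > 0 \<Longrightarrow> y > 0 \<Longrightarrow> (x - y) * (ln x - ln y) = 0 \<Longrightarrow> x = y"
  by auto

lemma restrict_eq_iff: "c \<in> extensional b \<Longrightarrow> (restrict a b = c) \<longleftrightarrow> (\<forall>w\<in>b. a w = c w)"
  by (auto simp: extensional_def fun_eq_iff)

lemma restrict_in: "c \<in> binvecs b \<Longrightarrow> b' \<subseteq> b \<Longrightarrow> restrict c b' \<in> binvecs b'"
  using binvecs_val[of c b] by (auto simp: binvecs_def) (metis in_mono less_irrefl)

lemma upd_in: "c \<in> binvecs b \<Longrightarrow> v \<in> b \<Longrightarrow> c(v := 1 - c v) \<in> binvecs b"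
  using binvecs_val[of c b] by (auto simp: binvecs_def PiE_def extensional_def) fastforce

lemma compl_upd: assumes "c \<in> binvecs b" "v \<in> b"
  shows "bcompl b (c(v := 1 - c v)) = (bcompl b c)(v := 1 - bcompl b c v)"
  using binvecs_val[OF assms] assms(2) by (auto simp: bcompl_def fun_eq_iff)

lemma compl_restrict: "b' \<subseteq> b \<Longrightarrow> restrict (bcompl b c) b' = bcompl b' (restrict c b')"
  by (auto simp: bcompl_def fun_eq_iff)

lemma marg_pos:
  assumes fin: "finite V" and pos: "\<forall>a\<in>binvecs V. p a > 0" and bV: "b \<subseteq> V" and c: "c \<in> binvecs b"
  shows "marginal V p b c > 0"
proof -
  define a0 where "a0 = (\<lambda>v. if v \<in> V then (if v \<in> b then c v else 0) else undefined)"
  have a0: "a0 \<in> binvecs V" using binvecs_val[OF c] by (auto simp: a0_def binvecs_def split: if_splits) (metis less_irrefl)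
  have "restrict a0 b = c"
    using bV binvecs_out[OF c] by (auto simp: a0_def fun_eq_iff)
  then have "a0 \<in> {a \<in> binvecs V. restrict a b = c}" using a0 by simp
  then show ?thesis unfolding marginal_def
    by (intro sum_pos2[of _ a0]) (use pos fin binvecs_finite a0 in auto)
qed

lemma marg_split:
  assumes fin: "finite V" and bV: "b \<subseteq> V" and v: "v \<in> b" and c: "c \<in> binvecs b"
  shows "marginal V p b c + marginal V p b (c(v := 1 - c v))
       = marginal V p (b - {v}) (restrict c (b - {v}))"
proof -
  let ?A1 = "{a \<in> binvecs V. restrict a b = c}"
  let ?A2 = "{a \<in> binvecs V. restrict a b = c(v := 1 - c v)}"
  let ?A = "{a \<in> binvecs V. restrict a (b - {v}) = restrict c (b - {v})}"
  have e1: "c \<in> extensional b" using binvecs_ext[OF c] .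
  have e2: "c(v := 1 - c v) \<in> extensional b" using binvecs_ext[OF upd_in[OF c v]] .
  have e3: "restrict c (b - {v}) \<in> extensional (b - {v})" by simp
  have cv: "c v = 0 \<or> c v = 1" using binvecs_val[OF c v] .
  have "?A = ?A1 \<union> ?A2"
  proof (intro set_eqI iffI)
    fix a assume "a \<in> ?A"
    then have a: "a \<in> binvecs V" "\<forall>w\<in>b - {v}. a w = c w"
      using restrict_eq_iff[OF e3, of a] by auto
    have "a v = 0 \<or> a v = 1" using binvecs_val[OF a(1)] v bV by auto
    then show "a \<in> ?A1 \<union> ?A2"
      using a cv restrict_eq_iff[OF e1, of a] restrict_eq_iff[OF e2, of a] by auto
  next
    fix a assume "a \<in> ?A1 \<union> ?A2"
    then show "a \<in> ?A"
      using restrict_eq_iff[OF e3, of a] restrict_eq_iff[OF e1, of a] restrict_eq_iff[OF e2, of a]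
      by auto
  qed
  moreover have "?A1 \<inter> ?A2 = {}"
    using restrict_eq_iff[OF e1] restrict_eq_iff[OF e2] cv v by force
  moreover have "finite ?A1" "finite ?A2" using binvecs_finite[OF fin] by auto
  ultimately show ?thesis unfolding marginal_def
    by (simp add: sum.union_disjoint)
qed

lemma backward:
  assumes fin: "finite V" and pos: "\<forall>a\<in>binvecs V. p a > 0"
    and eta0: "\<forall>b. b \<subseteq> V \<and> odd (card b) \<longrightarrow> eta V p b = 0"
  shows "b \<subseteq> V \<Longrightarrow> \<forall>c\<in>binvecs b. marginal V p b (bcompl b c) = marginal V p b c"
proof (induction "card b" arbitrary: b rule: less_induct)
  case less
  note bV = less.prems
  have finb: "finite b" using bV fin finite_subset by blast
  define P where "P = marginal V p b"
  define D where "D = (\<lambda>c. P c - P (bcompl b c))"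
  have Ppos: "\<And>c. c \<in> binvecs b \<Longrightarrow> P c > 0"
    unfolding P_def using marg_pos[OF fin pos bV] by blast
  have step: "D c + D (c(v := 1 - c v)) = 0" if c: "c \<in> binvecs b" and v: "v \<in> b" for c v
  proof -
    define e where "e = restrict c (b - {v})"
    have e: "e \<in> binvecs (b - {v})" unfolding e_def using restrict_in[OF c] by blast
    have IH: "marginal V p (b - {v}) (bcompl (b - {v}) e) = marginal V p (b - {v}) e"
      using less.hyps[of "b - {v}"] finb v bV e
      by (meson Diff_subset card_Diff1_less dual_order.trans)
    have s1: "P c + P (c(v := 1 - c v)) = marginal V p (b - {v}) e"
      unfolding P_def e_def using marg_split[OF fin bV v c] .
    have s2: "P (bcompl b c) + P (bcompl b (c(v := 1 - c v))) = marginal V p (b - {v}) (bcompl (b - {v}) e)"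
      unfolding P_def e_def compl_upd[OF c v]
      using marg_split[OF fin bV v bcompl_in[OF c]] compl_restrict[of "b - {v}" b c] by auto
    show ?thesis unfolding D_def using s1 s2 IH by linarith
  qed
  define z where "z = restrict (\<lambda>_. (0::nat)) b"
  have par: "\<forall>c\<in>binvecs b. (\<Sum>w\<in>b. c w) = n \<longrightarrow> D c = (-1)^n * D z" for n
  proof (induction n)
    case 0
    show ?case
    proof (intro ballI impI)
      fix c assume c: "c \<in> binvecs b" and "(\<Sum>w\<in>b. c w) = 0"
      then have "\<forall>w\<in>b. c w = 0" using finb by simp
      then have "c = z" using binvecs_out[OF c] by (auto simp: z_def fun_eq_iff)
      then show "D c = (-1)^0 * D z" by simp
    qed
  next
    case (Suc n)
    show ?case
    proof (intro ballI impI)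
      fix c assume c: "c \<in> binvecs b" and sc: "(\<Sum>w\<in>b. c w) = Suc n"
      then obtain v where v: "v \<in> b" "c v \<noteq> 0"
        by (metis Zero_neq_Suc sum.neutral)
      then have cv: "c v = 1" using binvecs_val[OF c v(1)] by auto
      let ?c' = "c(v := 1 - c v)"
      have c': "?c' \<in> binvecs b" using upd_in[OF c v(1)] .
      have "(\<Sum>w\<in>b. c w) = c v + (\<Sum>w\<in>b - {v}. c w)"
        using sum.remove[OF finb v(1)] by simp
      moreover have "(\<Sum>w\<in>b. ?c' w) = ?c' v + (\<Sum>w\<in>b - {v}. ?c' w)"
        by (rule sum.remove[OF finb v(1)])
      moreover have "(\<Sum>w\<in>b - {v}. ?c' w) = (\<Sum>w\<in>b - {v}. c w)"
        by (rule sum.cong) auto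
      ultimately have "(\<Sum>w\<in>b. ?c' w) = n" using sc cv by simp
      then have "D ?c' = (-1)^n * D z" using Suc.IH c' by blast
      then show "D c = (-1)^Suc n * D z" using step[OF c v(1)] by simp
    qed
  qed
  define T where "T = (\<Sum>c\<in>binvecs b. (-1::real)^(\<Sum>v\<in>b. c v) * ln (P c))"
  have T2: "(\<Sum>c\<in>binvecs b. (-1::real)^(\<Sum>v\<in>b. c v) * ln (P (bcompl b c))) = (-1)^card b * T"
    unfolding T_def using flip_sum[OF finb, of "\<lambda>c. ln (P c)"] .
  have T0: "T - (-1)^card b * T = 0"
  proof (cases "odd (card b)")
    case True
    then have "eta V p b = 0" using eta0 bV by blast
    then have "T = 0" unfolding eta_def T_def P_def by simp
    then show ?thesis by simp
  next
    case False then show ?thesis by simp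
  qed
  have "(\<Sum>c\<in>binvecs b. D c * (ln (P c) - ln (P (bcompl b c))))
      = (\<Sum>c\<in>binvecs b. D z * ((-1::real)^(\<Sum>v\<in>b. c v) * ln (P c)
            - (-1::real)^(\<Sum>v\<in>b. c v) * ln (P (bcompl b c))))"
    by (rule sum.cong) (use par in \<open>auto simp: algebra_simps\<close>)
  also have "\<dots> = D z * (T - (-1)^card b * T)"
    using T2 by (simp add: sum_distrib_left[symmetric] sum_subtractf T_def)
  also have "\<dots> = 0" using T0 by simp
  finally have sum0: "(\<Sum>c\<in>binvecs b. D c * (ln (P c) - ln (P (bcompl b c)))) = 0" .
  have nn: "\<And>c. c \<in> binvecs b \<Longrightarrow> 0 \<le> D c * (ln (P c) - ln (P (bcompl b c)))"
    unfolding D_def using ln_term_nonneg Ppos bcompl_in by blast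
  have "\<forall>c\<in>binvecs b. D c * (ln (P c) - ln (P (bcompl b c))) = 0"
    using sum0 nn by (subst (asm) sum_nonneg_eq_0_iff[OF binvecs_finite[OF finb]]) auto
  then show ?case
    unfolding D_def P_def[symmetric] using ln_term_zero Ppos bcompl_in by metis
qed

lemma forward_marg:
  assumes pal: "palindromic V p" and bV: "b \<subseteq> V" and c: "c \<in> binvecs b"
  shows "marginal V p b (bcompl b c) = marginal V p b c"
  unfolding marginal_def
proof (rule sym, rule sum.reindex_bij_witness[of _ "bcompl V" "bcompl V"])
  fix a assume a: "a \<in> {a \<in> binvecs V. restrict a b = c}"
  then show "bcompl V (bcompl V a) = a" by (simp add: bcompl_invol)
  show "bcompl V a \<in> {a \<in> binvecs V. restrict a b = bcompl b c}"
    using a bcompl_in compl_restrict[OF bV, of a] by auto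
  show "p (bcompl V a) = p a" using pal a unfolding palindromic_def by auto
next
  fix a assume a: "a \<in> {a \<in> binvecs V. restrict a b = bcompl b c}"
  then show "bcompl V (bcompl V a) = a" by (simp add: bcompl_invol)
  show "bcompl V a \<in> {a \<in> binvecs V. restrict a b = c}"
    using a bcompl_in compl_restrict[OF bV, of a] bcompl_invol[OF c] by auto
qed

lemma marg_full: assumes "c \<in> binvecs V" shows "marginal V p V c = p c"
proof -
  have "{a \<in> binvecs V. restrict a V = c} = {c}"
  proof (intro set_eqI iffI)
    fix a assume "a \<in> {a \<in> binvecs V. restrict a V = c}"
    then show "a \<in> {c}" using extensional_restrict[OF binvecs_ext[of a V]] by auto
  next
    fix a assume "a \<in> {c}"
    then show "a \<in> {a \<in> binvecs V. restrict a V = c}"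
      using assms extensional_restrict[OF binvecs_ext[of c V]] by auto
  qed
  then show ?thesis by (simp add: marginal_def)
qed

theorem proposition2p3:
  fixes d :: nat and p :: "(nat \<Rightarrow> nat) \<Rightarrow> real"
  assumes pos: "\<forall>a\<in>binvecs {1..d}. p a > 0"
    and sum1: "(\<Sum>a\<in>binvecs {1..d}. p a) = 1"
  shows "palindromic {1..d} p \<longleftrightarrow>
           (\<forall>b. b \<subseteq> {1..d} \<and> odd (card b) \<longrightarrow> eta {1..d} p b = 0)"
proof
  assume pal: "palindromic {1..d} p"
  show "\<forall>b. b \<subseteq> {1..d} \<and> odd (card b) \<longrightarrow> eta {1..d} p b = 0"
  proof (intro allI impI)
    fix b assume b: "b \<subseteq> {1..d} \<and> odd (card b)"
    then have finb: "finite b" using finite_subset by blast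
    define T where "T = (\<Sum>c\<in>binvecs b. (-1::real)^(\<Sum>v\<in>b. c v) * ln (marginal {1..d} p b c))"
    have "(\<Sum>c\<in>binvecs b. (-1::real)^(\<Sum>v\<in>b. c v) * ln (marginal {1..d} p b (bcompl b c))) = T"
      unfolding T_def using forward_marg[OF pal] b by (intro sum.cong) auto
    then have "T = (-1)^card b * T"
      using flip_sum[OF finb, of "\<lambda>c. ln (marginal {1..d} p b c)"] unfolding T_def by simp
    then have "T = 0" using b by simp
    then show "eta {1..d} p b = 0" unfolding eta_def T_def by simp
  qed
next
  assume "\<forall>b. b \<subseteq> {1..d} \<and> odd (card b) \<longrightarrow> eta {1..d} p b = 0"
  from backward[OF _ pos this, of "{1..d}"]
  have "\<forall>c\<in>binvecs {1..d}. marginal {1..d} p {1..d} (bcompl {1..d} c) = marginal {1..d} p {1..d} c"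
    by simp
  then show "palindromic {1..d} p"
    unfolding palindromic_def using marg_full bcompl_in by metis
qed

end
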